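(* Let $X=\{x_1,\dots,x_n\}$ be a finite set of propositional variables and $y\notin X$ a further variable, and let $\mathcal{L}$ be the set of Boolean circuits over $\mathit{PS}=X\cup\{y\}$. Then there exists a rectification operator $\star$ (in the sense defined in the context), and it is unique up to logical equivalence: if $\star$ and $\star'$ are both rectification operators, then $\Sigma\star T\equiv\Sigma\star' T$ for every classification circuit $\Sigma\in\mathcal{L}$ and every $T\in\mathcal{L}$.
   Context: A Boolean circuit over a set of variables $V$ is a directed acyclic graph whose leaves are labelled by variables of $V$ or by the constants $\top$ (=1) and $\bot$ (=0), and whose internal nodes are labelled by $\neg,\wedge,\vee$ or are decision nodes on a variable $v$ (a decision node on $v$ with low child $M$ and high child $P$ stands for $(\neg v\wedge\Phi_M)\vee(v\wedge\Phi_P)$); it is interpreted with the usual semantics of propositional logic. $\equiv$ denotes logical equivalence and $\models$ logical consequence/model satisfaction. Each instance $\vec x\in\{0,1\}^n$ is identified with the canonical term over $X$ containing $x_i$ if the $i$-th coordinate is 1 and $\neg x_i$ otherwise. For a Boolean circuit $\Phi$ and a consistent term $\gamma$, the conditioning $\Phi(\gamma)$ is the circuit obtained by replacing each occurrence of a variable $v$ of $\gamma$ by $\top$ if $v$ is a positive literal of $\gamma$ and by $\bot$ if $\neg v$ is a literal of $\gamma$. A circuit $\Phi\in\mathcal{L}$ classifies $\vec x$ if $\Phi(\vec x)$ has a unique model over $\{y\}$, i.e. $\Phi(\vec x)\equiv y$ (positive instance) or $\Phi(\vec x)\equiv\neg y$ (negative instance); $\Phi$ has the $XY$-classification property (is a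 classification circuit) if it classifies every $\vec x\in\{0,1\}^n$. For $T\in\mathcal{L}$ and $\vec x$, let $F(T,\vec x)=\top$ if $T(\vec x)$ is inconsistent, and otherwise $F(T,\vec x)$ is the conjunction of all literals $\ell\in\{y,\neg y\}$ with $T(\vec x)\models\ell$ (the empty conjunction being $\top$). $\Sigma$ is fact-compliant with $T$ on $\vec x$ if $\Sigma(\vec x)\models F(T,\vec x)$. For $W\subseteq\mathit{PS}$, $\exists W.\Phi$ denotes forgetting ($\exists\emptyset.\Phi\equiv\Phi$, $\exists\{v\}.\Phi\equiv\Phi(\neg v)\vee\Phi(v)$, iterated over the elements of $W$). A rectification operator $\star$ is a mapping associating with every classification circuit $\Sigma\in\mathcal{L}$ and every $T\in\mathcal{L}$ a circuit $\Sigma\star T\in\mathcal{L}$ such that: (RE1) $\Sigma\star T$ is a classification circuit; (RE2) if $\Sigma$ is fact-compliant with $T$ on $\vec x$, then $(\Sigma\star T)(\vec x)\equiv\Sigma(\vec x)$; (RE3) for every $\vec x$, $(\Sigma\star T)(\vec x)\models F(T,\vec x)$; (RE4) if $T$ is inconsistent then $\Sigma\star T\equiv\Sigma$; (RE5) if $\Sigma\equiv\Sigma'$ and $T\equiv T'$ then $\Sigma\star T\equiv\Sigma'\star T'$; (RE6) $\Sigma\star T\equiv(\exists W.\Sigma)\star(\exists W.T)$ where $W=\mathit{PS}\setminus(X\cup\{y\})$ (here $W=\emptyset$). *)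

theory Defs
  imports Main
begin

text \<open>Boolean circuits. Sharing in the DAG does not affect semantics, so circuits
are represented as syntax trees. Dec v M P is a decision node on v with low child M
and high child P.\<close>
datatype 'v circ = Var 'v | Top | Bot | Neg "'v circ" | And "'v circ" "'v circ"
  | Or "'v circ" "'v circ" | Dec 'v "'v circ" "'v circ"

fun vars :: "'v circ \<Rightarrow> 'v set" where
  "vars (Var v) = {v}"
| "vars Top = {}"
| "vars Bot = {}"
| "vars (Neg a) = vars a"
| "vars (And a b) = vars a \<union> vars b"
| "vars (Or a b) = vars a \<union> vars b"
| "vars (Dec v a b) = insert v (vars a \<union> vars b)"

fun eval :: "('v \<Rightarrow> bool) \<Rightarrow> 'v circ \<Rightarrow> bool" where
  "eval \<rho> (Var v) = \<rho> v"
| "eval \<rho> Top = True"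
| "eval \<rho> Bot = False"
| "eval \<rho> (Neg a) = (\<not> eval \<rho> a)"
| "eval \<rho> (And a b) = (eval \<rho> a \<and> eval \<rho> b)"
| "eval \<rho> (Or a b) = (eval \<rho> a \<or> eval \<rho> b)"
| "eval \<rho> (Dec v a b) = ((\<not> \<rho> v \<and> eval \<rho> a) \<or> (\<rho> v \<and> eval \<rho> b))"

definition circL :: "'v set \<Rightarrow> 'v \<Rightarrow> 'v circ set" where
  "circL X y = {\<Phi>. vars \<Phi> \<subseteq> insert y X}"

definition equiv :: "'v circ \<Rightarrow> 'v circ \<Rightarrow> bool" (infix "\<equiv>\<^sub>c" 50) where
  "\<Phi> \<equiv>\<^sub>c \<Psi> \<longleftrightarrow> (\<forall>\<rho>. eval \<rho> \<Phi> = eval \<rho> \<Psi>)"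

definition entails :: "'v circ \<Rightarrow> 'v circ \<Rightarrow> bool" (infix "\<Turnstile>\<^sub>c" 50) where
  "\<Phi> \<Turnstile>\<^sub>c \<Psi> \<longleftrightarrow> (\<forall>\<rho>. eval \<rho> \<Phi> \<longrightarrow> eval \<rho> \<Psi>)"

definition consistent :: "'v circ \<Rightarrow> bool" where
  "consistent \<Phi> \<longleftrightarrow> (\<exists>\<rho>. eval \<rho> \<Phi>)"

text \<open>Conditioning by the consistent term over the variables S whose polarity is
given by \<gamma>: every occurrence of a variable v \<in> S is replaced by Top/Bot; a decision
node on such a v thereby reduces to its high/low child.\<close>
fun cond :: "'v set \<Rightarrow> ('v \<Rightarrow> bool) \<Rightarrow> 'v circ \<Rightarrow> 'v circ" where
  "cond S \<gamma> (Var v) = (if v \<in> S then (if \<gamma> v then Top else Bot) else Var v)"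
| "cond S \<gamma> Top = Top"
| "cond S \<gamma> Bot = Bot"
| "cond S \<gamma> (Neg a) = Neg (cond S \<gamma> a)"
| "cond S \<gamma> (And a b) = And (cond S \<gamma> a) (cond S \<gamma> b)"
| "cond S \<gamma> (Or a b) = Or (cond S \<gamma> a) (cond S \<gamma> b)"
| "cond S \<gamma> (Dec v a b) = (if v \<in> S then (if \<gamma> v then cond S \<gamma> b else cond S \<gamma> a)
                           else Dec v (cond S \<gamma> a) (cond S \<gamma> b))"

text \<open>An instance x \<in> {0,1}^n is an assignment x of the variables in X (values
outside X are irrelevant); \<Phi>(x) is cond X x \<Phi>.\<close>
definition classifies :: "'v set \<Rightarrow> 'v \<Rightarrow> 'v circ \<Rightarrow> ('v \<Rightarrow> bool) \<Rightarrow> bool" where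
  "classifies X y \<Phi> x \<longleftrightarrow> (cond X x \<Phi> \<equiv>\<^sub>c Var y) \<or> (cond X x \<Phi> \<equiv>\<^sub>c Neg (Var y))"

definition classification_circuit :: "'v set \<Rightarrow> 'v \<Rightarrow> 'v circ \<Rightarrow> bool" where
  "classification_circuit X y \<Phi> \<longleftrightarrow> (\<forall>x. classifies X y \<Phi> x)"

definition Ffact :: "'v set \<Rightarrow> 'v \<Rightarrow> 'v circ \<Rightarrow> ('v \<Rightarrow> bool) \<Rightarrow> 'v circ" where
  "Ffact X y T x =
     (if \<not> consistent (cond X x T) then Top
      else And (if cond X x T \<Turnstile>\<^sub>c Var y then Var y else Top)
               (if cond X x T \<Turnstile>\<^sub>c Neg (Var y) then Neg (Var y) else Top))"

definition fact_compliant :: "'v set \<Rightarrow> 'v \<Rightarrow> 'v circ \<Rightarrow> 'v circ \<Rightarrow> ('v \<Rightarrow> bool) \<Rightarrow> bool" where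
  "fact_compliant X y \<Sigma> T x \<longleftrightarrow> cond X x \<Sigma> \<Turnstile>\<^sub>c Ffact X y T x"

fun forget :: "'v list \<Rightarrow> 'v circ \<Rightarrow> 'v circ" where
  "forget [] \<Phi> = \<Phi>"
| "forget (v # vs) \<Phi> = forget vs (Or (cond {v} (\<lambda>_. False) \<Phi>) (cond {v} (\<lambda>_. True) \<Phi>))"

definition rectification_operator ::
  "'v set \<Rightarrow> 'v \<Rightarrow> ('v circ \<Rightarrow> 'v circ \<Rightarrow> 'v circ) \<Rightarrow> bool" where
  "rectification_operator X y star \<longleftrightarrow>
    (\<forall>\<Sigma> T. \<Sigma> \<in> circL X y \<longrightarrow> classification_circuit X y \<Sigma> \<longrightarrow> T \<in> circL X y \<longrightarrow>
       star \<Sigma> T \<in> circL X y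
     \<and> classification_circuit X y (star \<Sigma> T)
     \<and> (\<forall>x. fact_compliant X y \<Sigma> T x \<longrightarrow> cond X x (star \<Sigma> T) \<equiv>\<^sub>c cond X x \<Sigma>)
     \<and> (\<forall>x. cond X x (star \<Sigma> T) \<Turnstile>\<^sub>c Ffact X y T x)
     \<and> (\<not> consistent T \<longrightarrow> star \<Sigma> T \<equiv>\<^sub>c \<Sigma>)
     \<and> (\<forall>\<Sigma>' T'. \<Sigma>' \<in> circL X y \<longrightarrow> classification_circuit X y \<Sigma>' \<longrightarrow> T' \<in> circL X y \<longrightarrow>
           \<Sigma> \<equiv>\<^sub>c \<Sigma>' \<longrightarrow> T \<equiv>\<^sub>c T' \<longrightarrow> star \<Sigma> T \<equiv>\<^sub>c star \<Sigma>' T')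
     \<and> (\<forall>ws. distinct ws \<longrightarrow> set ws = insert y X - (X \<union> {y}) \<longrightarrow>
           star \<Sigma> T \<equiv>\<^sub>c star (forget ws \<Sigma>) (forget ws T)))"

end

theory Submission
  imports Defs
begin

lemma eval_cond: "eval \<rho> (cond S \<gamma> \<Phi>) = eval (\<lambda>v. if v \<in> S then \<gamma> v else \<rho> v) \<Phi>"
  by (induction \<Phi>) auto

lemma vars_cond: "vars (cond S \<gamma> \<Phi>) \<subseteq> vars \<Phi>"
  by (induction \<Phi>) auto

lemma eval_agree: "(\<forall>v\<in>vars \<Phi>. \<rho> v = \<rho>' v) \<Longrightarrow> eval \<rho> \<Phi> = eval \<rho>' \<Phi>"
  by (induction \<Phi>) auto

definition ite :: "'v circ \<Rightarrow> 'v circ \<Rightarrow> 'v circ \<Rightarrow> 'v circ" where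
  "ite c a b = Or (And c a) (And (Neg c) b)"

definition Pc :: "'v \<Rightarrow> 'v circ \<Rightarrow> 'v circ" where
  "Pc y T = And (cond {y} (\<lambda>_. True) T) (Neg (cond {y} (\<lambda>_. False) T))"

definition Nc :: "'v \<Rightarrow> 'v circ \<Rightarrow> 'v circ" where
  "Nc y T = And (cond {y} (\<lambda>_. False) T) (Neg (cond {y} (\<lambda>_. True) T))"

definition rect :: "'v \<Rightarrow> 'v circ \<Rightarrow> 'v circ \<Rightarrow> 'v circ" where
  "rect y S T = ite (Pc y T) (Var y) (ite (Nc y T) (Neg (Var y)) S)"

definition asg :: "'v set \<Rightarrow> ('v \<Rightarrow> bool) \<Rightarrow> bool \<Rightarrow> 'v \<Rightarrow> bool" where
  "asg X x b = (\<lambda>v. if v \<in> X then x v else b)"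

definition pT :: "'v set \<Rightarrow> 'v circ \<Rightarrow> ('v \<Rightarrow> bool) \<Rightarrow> bool" where
  "pT X T x = (eval (asg X x True) T \<and> \<not> eval (asg X x False) T)"

definition nT :: "'v set \<Rightarrow> 'v circ \<Rightarrow> ('v \<Rightarrow> bool) \<Rightarrow> bool" where
  "nT X T x = (eval (asg X x False) T \<and> \<not> eval (asg X x True) T)"

lemma eval_cy:
  assumes "T \<in> circL X y" "y \<notin> X"
  shows "eval \<rho> (cond {y} (\<lambda>_. b) T) = eval (asg X \<rho> b) T"
  unfolding eval_cond asg_def
  by (rule eval_agree) (use assms in \<open>auto simp: circL_def\<close>)

lemma eval_rect:
  assumes "T \<in> circL X y" "y \<notin> X"
  shows "eval \<rho> (rect y S T) = (if pT X T \<rho> then \<rho> y else if nT X T \<rho> then \<not> \<rho> y else eval \<rho> S)"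
  using assms by (auto simp: rect_def ite_def Pc_def Nc_def pT_def nT_def eval_cy)

lemma rect_circL: "S \<in> circL X y \<Longrightarrow> T \<in> circL X y \<Longrightarrow> rect y S T \<in> circL X y"
  using vars_cond[of "{y}" "\<lambda>_. True" T] vars_cond[of "{y}" "\<lambda>_. False" T]
  by (auto simp: circL_def rect_def ite_def Pc_def Nc_def)

lemma asg_upd: "asg X (\<lambda>v. if v \<in> X then x v else \<rho> v) b = asg X x b"
  by (simp add: asg_def)
lemma pT_upd: "pT X T (\<lambda>v. if v \<in> X then x v else \<rho> v) = pT X T x"
  by (simp only: pT_def asg_upd)
lemma nT_upd: "nT X T (\<lambda>v. if v \<in> X then x v else \<rho> v) = nT X T x"
  by (simp only: nT_def asg_upd)

lemma eval_cond_rect: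
  assumes "T \<in> circL X y" "y \<notin> X"
  shows "eval \<rho> (cond X x (rect y S T)) =
    (if pT X T x then \<rho> y else if nT X T x then \<not> \<rho> y else eval \<rho> (cond X x S))"
  using assms by (simp add: eval_cond eval_rect pT_upd nT_upd)

lemma eval_cond_T:
  assumes "T \<in> circL X y" "y \<notin> X"
  shows "eval \<rho> (cond X x T) = (if \<rho> y then eval (asg X x True) T else eval (asg X x False) T)"
proof -
  have "eval \<rho> (cond X x T) = eval (asg X x (\<rho> y)) T"
    unfolding eval_cond asg_def
    by (rule eval_agree) (use assms in \<open>auto simp: circL_def\<close>)
  then show ?thesis by (cases "\<rho> y") simp_all
qed

lemma ex_if: "(\<exists>\<rho>::'v\<Rightarrow>bool. if \<rho> y then A else B) \<longleftrightarrow> A \<or> B"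
proof
  assume "\<exists>\<rho>::'v\<Rightarrow>bool. if \<rho> y then A else B"
  then obtain \<rho> :: "'v\<Rightarrow>bool" where "if \<rho> y then A else B" by blast
  then show "A \<or> B" by (cases "\<rho> y") simp_all
next
  assume "A \<or> B"
  then show "\<exists>\<rho>::'v\<Rightarrow>bool. if \<rho> y then A else B"
  proof
    assume A then show ?thesis by (intro exI[of _ "\<lambda>_. True"]) simp
  next
    assume B then show ?thesis by (intro exI[of _ "\<lambda>_. False"]) simp
  qed
qed

lemma all_if1: "(\<forall>\<rho>::'v\<Rightarrow>bool. (if \<rho> y then A else B) \<longrightarrow> \<rho> y) \<longleftrightarrow> \<not> B"
proof
  assume "\<forall>\<rho>::'v\<Rightarrow>bool. (if \<rho> y then A else B) \<longrightarrow> \<rho> y"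
  then have "(if (\<lambda>_::'v. False) y then A else B) \<longrightarrow> (\<lambda>_::'v. False) y" by (rule spec)
  then show "\<not> B" by simp
next
  assume "\<not> B"
  then show "\<forall>\<rho>::'v\<Rightarrow>bool. (if \<rho> y then A else B) \<longrightarrow> \<rho> y" by auto
qed

lemma all_if2: "(\<forall>\<rho>::'v\<Rightarrow>bool. (if \<rho> y then A else B) \<longrightarrow> \<not> \<rho> y) \<longleftrightarrow> \<not> A"
proof
  assume "\<forall>\<rho>::'v\<Rightarrow>bool. (if \<rho> y then A else B) \<longrightarrow> \<not> \<rho> y"
  then have "(if (\<lambda>_::'v. True) y then A else B) \<longrightarrow> \<not> (\<lambda>_::'v. True) y" by (rule spec)
  then show "\<not> A" by simp
next
  assume "\<not> A"
  then show "\<forall>\<rho>::'v\<Rightarrow>bool. (if \<rho> y then A else B) \<longrightarrow> \<not> \<rho> y" by auto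
qed

lemma consistent_cond:
  assumes "T \<in> circL X y" "y \<notin> X"
  shows "consistent (cond X x T) \<longleftrightarrow> eval (asg X x True) T \<or> eval (asg X x False) T"
  unfolding consistent_def eval_cond_T[OF assms] by (rule ex_if)

lemma ent_y:
  assumes "T \<in> circL X y" "y \<notin> X"
  shows "(cond X x T \<Turnstile>\<^sub>c Var y) \<longleftrightarrow> \<not> eval (asg X x False) T"
    and "(cond X x T \<Turnstile>\<^sub>c Neg (Var y)) \<longleftrightarrow> \<not> eval (asg X x True) T"
  unfolding entails_def eval_cond_T[OF assms] eval.simps
  by (rule all_if1, rule all_if2)

lemma eval_Ffact:
  assumes "T \<in> circL X y" "y \<notin> X"
  shows "eval \<rho> (Ffact X y T x) = ((pT X T x \<longrightarrow> \<rho> y) \<and> (nT X T x \<longrightarrow> \<not> \<rho> y))"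
  using assms unfolding Ffact_def
  by (auto simp: consistent_cond ent_y pT_def nT_def)


lemma classifies_iff: "classifies X y \<Phi> x \<longleftrightarrow>
   (\<forall>\<rho>. eval \<rho> (cond X x \<Phi>) = \<rho> y) \<or> (\<forall>\<rho>. eval \<rho> (cond X x \<Phi>) = (\<not> \<rho> y))"
  by (simp add: classifies_def equiv_def)

lemma rect_ok:
  assumes "y \<notin> X" "S \<in> circL X y" "classification_circuit X y S" "T \<in> circL X y"
  shows "rect y S T \<in> circL X y
     \<and> classification_circuit X y (rect y S T)
     \<and> (\<forall>x. fact_compliant X y S T x \<longrightarrow> cond X x (rect y S T) \<equiv>\<^sub>c cond X x S)
     \<and> (\<forall>x. cond X x (rect y S T) \<Turnstile>\<^sub>c Ffact X y T x)
     \<and> (\<not> consistent T \<longrightarrow> rect y S T \<equiv>\<^sub>c S)"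
proof (intro conjI allI impI)
  show "rect y S T \<in> circL X y" using assms by (intro rect_circL)
next
  show "classification_circuit X y (rect y S T)"
    unfolding classification_circuit_def classifies_iff
  proof
    fix x
    have "classifies X y S x" using assms(3) unfolding classification_circuit_def by blast
    then have h: "(\<forall>\<rho>. eval \<rho> (cond X x S) = \<rho> y) \<or> (\<forall>\<rho>. eval \<rho> (cond X x S) = (\<not> \<rho> y))"
      by (simp only: classifies_iff)
    show "(\<forall>\<rho>. eval \<rho> (cond X x (rect y S T)) = \<rho> y) \<or>
          (\<forall>\<rho>. eval \<rho> (cond X x (rect y S T)) = (\<not> \<rho> y))"
    proof (cases "pT X T x")
      case True
      then show ?thesis using assms by (simp add: eval_cond_rect)
    next
      case F1: False
      show ?thesis
      proof (cases "nT X T x")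
        case True
        then show ?thesis using F1 assms by (simp add: eval_cond_rect)
      next
        case False
        have "eval \<rho> (cond X x (rect y S T)) = eval \<rho> (cond X x S)" for \<rho>
          using F1 False assms by (simp add: eval_cond_rect)
        then show ?thesis using h by simp
      qed
    qed
  qed
next
  fix x assume fc: "fact_compliant X y S T x"
  have cl: "classifies X y S x" using assms(3) unfolding classification_circuit_def by blast
  have fc': "\<And>\<rho>. eval \<rho> (cond X x S) \<Longrightarrow> (pT X T x \<longrightarrow> \<rho> y) \<and> (nT X T x \<longrightarrow> \<not> \<rho> y)"
    using fc assms by (auto simp: fact_compliant_def entails_def eval_Ffact)
  have "eval \<rho> (cond X x (rect y S T)) = eval \<rho> (cond X x S)" for \<rho>
  proof -
    have pn: "\<not> (pT X T x \<and> nT X T x)" by (auto simp: pT_def nT_def)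
    show ?thesis
    proof (cases "pT X T x \<or> nT X T x")
      case True
      from cl show ?thesis unfolding classifies_iff
      proof
        assume h: "\<forall>\<rho>. eval \<rho> (cond X x S) = \<rho> y"
        have "\<not> nT X T x" using fc'[of "\<lambda>_. True"] h by auto
        then show ?thesis using True h assms by (simp add: eval_cond_rect)
      next
        assume h: "\<forall>\<rho>. eval \<rho> (cond X x S) = (\<not> \<rho> y)"
        have "\<not> pT X T x" using fc'[of "\<lambda>_. False"] h by auto
        then show ?thesis using True h assms by (simp add: eval_cond_rect)
      qed
    next
      case False
      then show ?thesis using assms by (simp add: eval_cond_rect)
    qed
  qed
  then show "cond X x (rect y S T) \<equiv>\<^sub>c cond X x S" by (simp add: equiv_def)
next
  fix x
  show "cond X x (rect y S T) \<Turnstile>\<^sub>c Ffact X y T x"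
    using assms by (auto simp: entails_def eval_Ffact eval_cond_rect pT_def nT_def)
next
  assume "\<not> consistent T"
  then have "\<And>\<rho>. \<not> eval \<rho> T" by (auto simp: consistent_def)
  then show "rect y S T \<equiv>\<^sub>c S"
    using assms by (simp add: equiv_def eval_rect pT_def nT_def)
qed

lemma rect_cong:
  assumes "y \<notin> X" "T \<in> circL X y" "T' \<in> circL X y" "S \<equiv>\<^sub>c S'" "T \<equiv>\<^sub>c T'"
  shows "rect y S T \<equiv>\<^sub>c rect y S' T'"
  using assms by (simp add: equiv_def eval_rect pT_def nT_def)

lemma rect_operator:
  assumes "y \<notin> X"
  shows "rectification_operator X y (rect y)"
  unfolding rectification_operator_def
proof (intro allI impI)
  fix S T assume a: "S \<in> circL X y" "classification_circuit X y S" "T \<in> circL X y"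
  have ws: "\<forall>ws. distinct ws \<longrightarrow> set ws = insert y X - (X \<union> {y}) \<longrightarrow>
           rect y S T \<equiv>\<^sub>c rect y (forget ws S) (forget ws T)"
    by (auto simp: equiv_def)
  show "rect y S T \<in> circL X y
     \<and> classification_circuit X y (rect y S T)
     \<and> (\<forall>x. fact_compliant X y S T x \<longrightarrow> cond X x (rect y S T) \<equiv>\<^sub>c cond X x S)
     \<and> (\<forall>x. cond X x (rect y S T) \<Turnstile>\<^sub>c Ffact X y T x)
     \<and> (\<not> consistent T \<longrightarrow> rect y S T \<equiv>\<^sub>c S)
     \<and> (\<forall>\<Sigma>' T'. \<Sigma>' \<in> circL X y \<longrightarrow> classification_circuit X y \<Sigma>' \<longrightarrow> T' \<in> circL X y \<longrightarrow>
           S \<equiv>\<^sub>c \<Sigma>' \<longrightarrow> T \<equiv>\<^sub>c T' \<longrightarrow> rect y S T \<equiv>\<^sub>c rect y \<Sigma>' T')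
     \<and> (\<forall>ws. distinct ws \<longrightarrow> set ws = insert y X - (X \<union> {y}) \<longrightarrow>
           rect y S T \<equiv>\<^sub>c rect y (forget ws S) (forget ws T))"
    using rect_ok[OF assms a] rect_cong[OF assms a(3)] ws by blast
qed

lemma eval_self: "eval \<rho> \<Phi> = eval \<rho> (cond X \<rho> \<Phi>)"
  by (simp add: eval_cond)

lemma unique:
  assumes r1: "rectification_operator X y star" and r2: "rectification_operator X y star'"
    and a: "S \<in> circL X y" "classification_circuit X y S" "T \<in> circL X y"
  shows "star S T \<equiv>\<^sub>c star' S T"
proof -
  have A: "classification_circuit X y (star S T)"
    "\<And>x. fact_compliant X y S T x \<Longrightarrow> cond X x (star S T) \<equiv>\<^sub>c cond X x S"
    "\<And>x. cond X x (star S T) \<Turnstile>\<^sub>c Ffact X y T x"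
    using r1 a unfolding rectification_operator_def by blast+
  have B: "classification_circuit X y (star' S T)"
    "\<And>x. fact_compliant X y S T x \<Longrightarrow> cond X x (star' S T) \<equiv>\<^sub>c cond X x S"
    "\<And>x. cond X x (star' S T) \<Turnstile>\<^sub>c Ffact X y T x"
    using r2 a unfolding rectification_operator_def by blast+
  have "cond X x (star S T) \<equiv>\<^sub>c cond X x (star' S T)" for x
  proof (cases "fact_compliant X y S T x")
    case True
    then show ?thesis using A(2) B(2) by (simp add: equiv_def)
  next
    case False
    have c1: "classifies X y (star S T) x" using A(1) unfolding classification_circuit_def by blast
    have c2: "classifies X y (star' S T) x" using B(1) unfolding classification_circuit_def by blast
    show ?thesis
    proof (rule ccontr)
      assume ne: "\<not> cond X x (star S T) \<equiv>\<^sub>c cond X x (star' S T)"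
      have "\<forall>\<rho>. eval \<rho> (Ffact X y T x)"
      proof
        fix \<rho>
        have "(\<forall>\<rho>. eval \<rho> (cond X x (star S T)) = \<rho> y) \<and> (\<forall>\<rho>. eval \<rho> (cond X x (star' S T)) = (\<not> \<rho> y))
          \<or> (\<forall>\<rho>. eval \<rho> (cond X x (star S T)) = (\<not> \<rho> y)) \<and> (\<forall>\<rho>. eval \<rho> (cond X x (star' S T)) = \<rho> y)"
          using c1 c2 ne unfolding classifies_iff by (auto simp: equiv_def)
        then have "eval \<rho> (cond X x (star S T)) \<or> eval \<rho> (cond X x (star' S T))"
          by (cases "\<rho> y") auto
        then show "eval \<rho> (Ffact X y T x)"
          using A(3)[of x] B(3)[of x] unfolding entails_def by blast
      qed
      then have "fact_compliant X y S T x" by (simp add: fact_compliant_def entails_def)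
      then show False using False by blast
    qed
  qed
  note eqx = this
  show ?thesis
    unfolding equiv_def
  proof (intro allI)
    fix \<rho>
    from eqx have "eval \<rho> (cond X \<rho> (star S T)) = eval \<rho> (cond X \<rho> (star' S T))"
      by (simp add: equiv_def)
    then show "eval \<rho> (star S T) = eval \<rho> (star' S T)"
      using eval_self[of \<rho> "star S T" X] eval_self[of \<rho> "star' S T" X] by simp
  qed
qed

theorem proposition1:
  fixes X :: "'v set" and y :: 'v
  assumes "finite X" and "y \<notin> X"
  shows "(\<exists>star. rectification_operator X y star)
       \<and> (\<forall>star star'. rectification_operator X y star \<longrightarrow> rectification_operator X y star' \<longrightarrow>
            (\<forall>\<Sigma> T. \<Sigma> \<in> circL X y \<longrightarrow> classification_circuit X y \<Sigma> \<longrightarrow> T \<in> circL X y \<longrightarrow>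
               star \<Sigma> T \<equiv>\<^sub>c star' \<Sigma> T))"
proof (intro conjI allI impI)
  show "\<exists>star. rectification_operator X y star"
    by (rule exI, rule rect_operator[OF assms(2)])
next
  fix star star' \<Sigma> T
  assume "rectification_operator X y star" "rectification_operator X y star'"
    "\<Sigma> \<in> circL X y" "classification_circuit X y \<Sigma>" "T \<in> circL X y"
  then show "star \<Sigma> T \<equiv>\<^sub>c star' \<Sigma> T" by (rule unique)
qed

end
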